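(* Let $\mathcal{H}$ be a separable complex Hilbert space with $\dim\mathcal{H}=\infty$, and let $A\in\mathcal{B}(\mathcal{H})$. Then there exist two orthonormal bases $(u_n)_{n\in\mathbb{N}}$ and $(v_n)_{n\in\mathbb{N}}$ of $\mathcal{H}$ such that, for every $N\in\mathbb{N}$, the $N\times N$ matrix $A_N$ with entries $(A_N)_{ij}=\langle v_i,Au_j\rangle$, $i,j\in\{1,\dots,N\}$, is singular.
   Context: $\mathcal{B}(\mathcal{H})$ denotes the space of bounded, everywhere defined linear operators on $\mathcal{H}$. The inner product $\langle\cdot,\cdot\rangle$ is antilinear in the first entry and linear in the second. *)

theory Defs
  imports Complex_Main "HOL-Library.Countable_Set" "Jordan_Normal_Form.Determinant"
begin

class complex_inner = ab_group_add +
  fixes scaleC :: "complex \<Rightarrow> 'a \<Rightarrow> 'a" (infixr "*\<^sub>C" 75)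
  fixes cinner :: "'a \<Rightarrow> 'a \<Rightarrow> complex"
  assumes scaleC_add_right: "a *\<^sub>C (x + y) = a *\<^sub>C x + a *\<^sub>C y"
    and scaleC_add_left: "(a + b) *\<^sub>C x = a *\<^sub>C x + b *\<^sub>C x"
    and scaleC_scaleC: "a *\<^sub>C (b *\<^sub>C x) = (a * b) *\<^sub>C x"
    and scaleC_one: "1 *\<^sub>C x = x"
    and cinner_add_right: "cinner x (y + z) = cinner x y + cinner x z"
    and cinner_scaleC_right: "cinner x (a *\<^sub>C y) = a * cinner x y"
    and cinner_commute: "cinner y x = cnj (cinner x y)"
    and cinner_ge_zero: "0 \<le> Re (cinner x x)"
    and cinner_eq_zero_iff: "cinner x x = 0 \<longleftrightarrow> x = 0"

definition cnorm :: "'a::complex_inner \<Rightarrow> real" where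
  "cnorm x = sqrt (Re (cinner x x))"

class chilbert_space = complex_inner +
  assumes cauchy_converges:
    "\<And>X :: nat \<Rightarrow> 'a. (\<forall>e>0. \<exists>M. \<forall>m\<ge>M. \<forall>n\<ge>M. sqrt (Re (cinner (X m - X n) (X m - X n))) < e)
       \<Longrightarrow> (\<exists>L. \<forall>e>0. \<exists>M. \<forall>n\<ge>M. sqrt (Re (cinner (X n - L) (X n - L))) < e)"

definition cspan :: "'a::complex_inner set \<Rightarrow> 'a set" where
  "cspan S = {\<Sum>s\<in>T. c s *\<^sub>C s | T c. finite T \<and> T \<subseteq> S}"

definition cfinite_dim :: "'a::complex_inner itself \<Rightarrow> bool" where
  "cfinite_dim _ \<longleftrightarrow> (\<exists>S::'a set. finite S \<and> cspan S = UNIV)"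

definition cseparable :: "'a::complex_inner itself \<Rightarrow> bool" where
  "cseparable _ \<longleftrightarrow> (\<exists>D::'a set. countable D \<and> (\<forall>x. \<forall>e>0. \<exists>d\<in>D. cnorm (x - d) < e))"

definition bounded_cop :: "('a::complex_inner \<Rightarrow> 'a) \<Rightarrow> bool" where
  "bounded_cop A \<longleftrightarrow>
     (\<forall>x y. A (x + y) = A x + A y) \<and> (\<forall>c x. A (c *\<^sub>C x) = c *\<^sub>C A x) \<and>
     (\<exists>K. \<forall>x. cnorm (A x) \<le> K * cnorm x)"

definition orthonormal_basis :: "(nat \<Rightarrow> 'a::complex_inner) \<Rightarrow> bool" where
  "orthonormal_basis u \<longleftrightarrow>
     (\<forall>i j. cinner (u i) (u j) = (if i = j then 1 else 0)) \<and>
     (\<forall>x. \<forall>e>0. \<exists>y\<in>cspan (range u). cnorm (x - y) < e)"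

end

theory Submission
  imports Defs
begin

lemma det_zero_row:
  fixes B :: "'b::comm_ring_1 mat"
  assumes B: "B \<in> carrier_mat n n" and k: "k < n" and z: "\<And>j. j < n \<Longrightarrow> B $$ (k, j) = 0"
  shows "det B = 0"
proof -
  have "\<And>p. p permutes {0..<n} \<Longrightarrow> (\<Prod>i=0..<n. B $$ (i, p i)) = 0"
  proof -
    fix p assume p: "p permutes {0..<n}"
    have "p k < n" using p k by (metis atLeastLessThan_iff permutes_in_image zero_le)
    then show "(\<Prod>i=0..<n. B $$ (i, p i)) = 0"
      by (intro prod_zero bexI[of _ k]) (use k z in auto)
  qed
  then show ?thesis using B unfolding det_def' [OF B] by simp
qed

lemma det_zero_col:
  fixes B :: "'b::comm_ring_1 mat"
  assumes B: "B \<in> carrier_mat n n" and k: "k < n" and z: "\<And>i. i < n \<Longrightarrow> B $$ (i, k) = 0"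
  shows "det B = 0"
proof -
  have "det B = det (transpose_mat B)" using det_transpose[OF B] by simp
  also have "\<dots> = 0" by (rule det_zero_row[of _ n k]) (use B k z in auto)
  finally show ?thesis .
qed

lemma scaleC_zero_left[simp]: "(0::complex) *\<^sub>C (x::'a::complex_inner) = 0"
proof -
  have "(0::complex) *\<^sub>C x + 0 *\<^sub>C x = 0 *\<^sub>C x + 0"
    using scaleC_add_left[of 0 0 x] by simp
  then show ?thesis by simp
qed

lemma scaleC_zero_right[simp]: "a *\<^sub>C (0::'a::complex_inner) = 0"
proof -
  have "a *\<^sub>C (0::'a) + a *\<^sub>C 0 = a *\<^sub>C 0 + 0"
    using scaleC_add_right[of a "0::'a" 0] by simp
  then show ?thesis by simp
qed

lemma cinner_zero_right[simp]: "cinner x (0::'a::complex_inner) = 0"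
proof -
  have "cinner x (0::'a) + cinner x 0 = cinner x 0 + 0"
    using cinner_add_right[of x "0::'a" 0] by simp
  then show ?thesis by simp
qed

lemma cinner_zero_left[simp]: "cinner (0::'a::complex_inner) x = 0"
  by (metis cinner_commute cinner_zero_right complex_cnj_zero)

lemma cinner_scaleC_left: "cinner (a *\<^sub>C (x::'a::complex_inner)) y = cnj a * cinner x y"
  by (metis cinner_commute cinner_scaleC_right complex_cnj_cnj complex_cnj_mult)

lemma cinner_add_left: "cinner ((x::'a::complex_inner) + y) z = cinner x z + cinner y z"
  by (metis cinner_commute cinner_add_right complex_cnj_add)

lemma cinner_sum_right: "cinner x (\<Sum>i\<in>I. f i) = (\<Sum>i\<in>I. cinner (x::'a::complex_inner) (f i))"
  by (induction I rule: infinite_finite_induct) (auto simp: cinner_add_right)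

lemma cinner_diff_right: "cinner x ((y::'a::complex_inner) - z) = cinner x y - cinner x z"
  using cinner_add_right[of x "y - z" z] by (simp add: algebra_simps)

lemma scaleC_sum_right: "a *\<^sub>C (\<Sum>i\<in>I. f i) = (\<Sum>i\<in>I. a *\<^sub>C (f i::'a::complex_inner))"
  by (induction I rule: infinite_finite_induct) (auto simp: scaleC_add_right)

lemma cinner_self_real: "cinner x (x::'a::complex_inner) = complex_of_real (Re (cinner x x))"
  by (metis cinner_commute Reals_cnj_iff complex_eq_iff of_real_Re Im_complex_of_real)

lemma cspan_zero: "0 \<in> cspan S"
  unfolding cspan_def by (rule CollectI, rule exI[of _ "{}"]) auto

lemma cspan_base: "s \<in> S \<Longrightarrow> s \<in> cspan S"
  unfolding cspan_def
  by (rule CollectI, rule exI[of _ "{s}"], rule exI[of _ "\<lambda>_. 1"]) (auto simp: scaleC_one)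

lemma cspan_mono: "S \<subseteq> S' \<Longrightarrow> cspan S \<subseteq> cspan S'"
  unfolding cspan_def by blast

lemma cspan_scale: "x \<in> cspan S \<Longrightarrow> a *\<^sub>C x \<in> cspan S"
proof -
  assume "x \<in> cspan S"
  then obtain T c where T: "finite T" "T \<subseteq> S" and x: "x = (\<Sum>s\<in>T. c s *\<^sub>C s)"
    unfolding cspan_def by blast
  have "a *\<^sub>C x = (\<Sum>s\<in>T. (a * c s) *\<^sub>C s)"
    unfolding x scaleC_sum_right by (simp add: scaleC_scaleC)
  then show ?thesis using T unfolding cspan_def
    by (intro CollectI exI[of _ T] exI[of _ "\<lambda>s. a * c s"]) auto
qed

lemma cspan_add: "x \<in> cspan S \<Longrightarrow> y \<in> cspan S \<Longrightarrow> x + y \<in> cspan S"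
proof -
  assume "x \<in> cspan S" "y \<in> cspan S"
  then obtain T1 c1 T2 c2 where T: "finite T1" "T1 \<subseteq> S" "finite T2" "T2 \<subseteq> S"
    and x: "x = (\<Sum>s\<in>T1. c1 s *\<^sub>C s)" and y: "y = (\<Sum>s\<in>T2. c2 s *\<^sub>C s)"
    unfolding cspan_def by blast
  define c where "c s = (if s \<in> T1 then c1 s else 0) + (if s \<in> T2 then c2 s else 0)" for s
  have fin: "finite (T1 \<union> T2)" using T by auto
  have "(\<Sum>s\<in>T1 \<union> T2. c s *\<^sub>C s) =
     (\<Sum>s\<in>T1 \<union> T2. (if s \<in> T1 then c1 s *\<^sub>C s else 0)) + (\<Sum>s\<in>T1 \<union> T2. (if s \<in> T2 then c2 s *\<^sub>C s else 0))"
    unfolding c_def scaleC_add_left sum.distrib[symmetric] by (intro sum.cong) auto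
  also have "\<dots> = x + y"
    unfolding x y sum.inter_restrict[OF fin, symmetric]
    by (simp add: Int_absorb1)
  finally show ?thesis using T fin unfolding cspan_def
    by (intro CollectI exI[of _ "T1 \<union> T2"] exI[of _ c]) auto
qed

lemma cspan_sum: "(\<And>i. i \<in> I \<Longrightarrow> f i \<in> cspan S) \<Longrightarrow> sum f I \<in> cspan S"
  by (induction I rule: infinite_finite_induct) (auto simp: cspan_zero cspan_add)

definition lin :: "('a::complex_inner \<Rightarrow> complex) \<Rightarrow> bool" where
  "lin f \<longleftrightarrow> (\<forall>x y. f (x + y) = f x + f y) \<and> (\<forall>c x. f (c *\<^sub>C x) = c * f x)"

lemma kernel_big:
  fixes F :: "('a::complex_inner \<Rightarrow> complex) set"
  assumes "finite F" "\<forall>f\<in>F. lin f" "\<not> cfinite_dim TYPE('a)"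
  shows "\<forall>S. finite S \<longrightarrow> \<not> ({x. \<forall>f\<in>F. f x = 0} \<subseteq> cspan S)"
  using assms(1,2)
proof (induction F rule: finite_induct)
  case empty
  then show ?case using assms(3) unfolding cfinite_dim_def by auto
next
  case (insert g F)
  let ?K = "{x. \<forall>f\<in>F. f x = 0}"
  show ?case
  proof (intro allI impI notI)
    fix S :: "'a set" assume S: "finite S" and sub: "{x. \<forall>f\<in>insert g F. f x = 0} \<subseteq> cspan S"
    have linF: "\<forall>f\<in>F. lin f" and lg: "lin g" using insert by auto
    show False
    proof (cases "\<exists>a\<in>?K. g a \<noteq> 0")
      case True
      then obtain a where a: "a \<in> ?K" "g a \<noteq> 0" by blast
      have "?K \<subseteq> cspan (insert a S)"
      proof
        fix y assume y: "y \<in> ?K"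
        define t where "t = g y / g a"
        define z where "z = y + (- t) *\<^sub>C a"
        have "z \<in> {x. \<forall>f\<in>insert g F. f x = 0}"
        proof (intro CollectI ballI)
          fix f assume f: "f \<in> insert g F"
          then have "lin f" using linF lg by auto
          then have fz: "f z = f y + (- t) * f a" unfolding z_def lin_def by simp
          show "f z = 0"
          proof (cases "f = g")
            case True then show ?thesis using fz a unfolding t_def by simp
          next
            case False then show ?thesis using fz a y f by auto
          qed
        qed
        then have "z \<in> cspan (insert a S)" using sub cspan_mono[of S "insert a S"] by blast
        moreover have "t *\<^sub>C a \<in> cspan (insert a S)" by (intro cspan_scale cspan_base) simp
        ultimately have "z + t *\<^sub>C a \<in> cspan (insert a S)" by (rule cspan_add)
        moreover have "z + t *\<^sub>C a = y"
          unfolding z_def using scaleC_add_left[of "-t" t a] by (simp add: add.assoc)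
        ultimately show "y \<in> cspan (insert a S)" by simp
      qed
      then show False using insert.IH linF S by blast
    next
      case False
      then have "?K \<subseteq> cspan S" using sub by auto
      then show False using insert.IH linF S by blast
    qed
  qed
qed

lemma kernel_nonzero:
  fixes F :: "('a::complex_inner \<Rightarrow> complex) set"
  assumes "finite F" "\<forall>f\<in>F. lin f" "\<not> cfinite_dim TYPE('a)"
  shows "\<exists>x. cinner x x = 1 \<and> (\<forall>f\<in>F. f x = 0)"
proof -
  from kernel_big[OF assms, rule_format, of "{}"]
  obtain x where x: "\<forall>f\<in>F. f x = 0" "x \<notin> cspan {}" by blast
  then have "x \<noteq> 0" using cspan_zero by auto
  then have r: "Re (cinner x x) > 0"
    using cinner_ge_zero[of x] cinner_eq_zero_iff[of x] cinner_self_real[of x]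
    by (metis less_eq_real_def of_real_0)
  define c where "c = complex_of_real (1 / sqrt (Re (cinner x x)))"
  have "cinner (c *\<^sub>C x) (c *\<^sub>C x) = cnj c * c * cinner x x"
    by (simp add: cinner_scaleC_left cinner_scaleC_right)
  also have "\<dots> = 1"
    apply (subst cinner_self_real)
    using r unfolding c_def
    by (simp flip: of_real_mult)
  finally have "cinner (c *\<^sub>C x) (c *\<^sub>C x) = 1" .
  moreover have "\<forall>f\<in>F. f (c *\<^sub>C x) = 0" using x assms(2) unfolding lin_def by auto
  ultimately show ?thesis by blast
qed


definition onb :: "nat \<Rightarrow> (nat \<Rightarrow> 'a::complex_inner) \<Rightarrow> bool" where
  "onb n e \<longleftrightarrow> (\<forall>i<n. \<forall>j<n. cinner (e i) (e j) = (if i = j then 1 else 0))"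

lemma onb_cong: "(\<And>i. i < n \<Longrightarrow> e i = e' i) \<Longrightarrow> onb n e = onb n e'"
  unfolding onb_def by auto

lemma onb_mono: "onb n e \<Longrightarrow> m \<le> n \<Longrightarrow> onb m e"
  unfolding onb_def by auto

lemma onb_extend:
  assumes "onb n e" "cinner w w = 1" "\<forall>i<n. cinner (e i) w = 0"
  shows "onb (Suc n) (e(n := w))"
proof -
  have "\<forall>i<n. cinner w (e i) = 0" using assms(3) by (metis cinner_commute complex_cnj_zero)
  then show ?thesis using assms unfolding onb_def by (auto simp: less_Suc_eq)
qed

lemma image_upd_lessThan: "(e(n := w)) ` {..<Suc n} = insert w (e ` {..<n})"
  by (auto simp: lessThan_Suc)

lemma lin_cinner: "lin (\<lambda>x. cinner a x)"
  unfolding lin_def by (simp add: cinner_add_right cinner_scaleC_right)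

lemma free_step:
  fixes e :: "nat \<Rightarrow> 'a::complex_inner"
  assumes "onb n e" "finite F" "\<forall>f\<in>F. lin f" "\<not> cfinite_dim TYPE('a)"
  shows "\<exists>w. onb (Suc n) (e(n := w)) \<and> (\<forall>f\<in>F. f w = 0)"
proof -
  let ?G = "F \<union> (\<lambda>i x. cinner (e i) x) ` {..<n}"
  have "finite ?G" "\<forall>f\<in>?G. lin f" using assms lin_cinner by auto
  from kernel_nonzero[OF this assms(4)] obtain w where
    w: "cinner w w = 1" "\<forall>f\<in>?G. f w = 0" by blast
  then have "onb (Suc n) (e(n := w))" using assms(1) by (intro onb_extend) auto
  then show ?thesis using w by auto
qed

lemma complete_step:
  fixes e :: "nat \<Rightarrow> 'a::complex_inner"
  assumes "onb n e" "\<not> cfinite_dim TYPE('a)"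
  shows "\<exists>w. onb (Suc n) (e(n := w)) \<and> d \<in> cspan ((e(n := w)) ` {..<Suc n})"
proof -
  define p where "p = (\<Sum>i<n. cinner (e i) d *\<^sub>C e i)"
  define x where "x = d - p"
  have orth: "cinner (e j) x = 0" if j: "j < n" for j
  proof -
    have "cinner (e j) p = (\<Sum>i<n. cinner (e i) d * cinner (e j) (e i))"
      unfolding p_def cinner_sum_right by (simp add: cinner_scaleC_right)
    also have "\<dots> = (\<Sum>i<n. if j = i then cinner (e i) d else 0)"
      using assms(1) j unfolding onb_def by (intro sum.cong) auto
    also have "\<dots> = cinner (e j) d" using j by simp
    finally show ?thesis unfolding x_def cinner_diff_right by simp
  qed
  have pspan: "p \<in> cspan (e ` {..<n})"
    unfolding p_def by (intro cspan_sum cspan_scale cspan_base) auto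
  show ?thesis
  proof (cases "x = 0")
    case True
    from free_step[OF assms(1) _ _ assms(2), of "{}"] obtain w where w: "onb (Suc n) (e(n := w))" by auto
    have "d = p" using True unfolding x_def by simp
    then have "d \<in> cspan ((e(n := w)) ` {..<Suc n})"
      using pspan cspan_mono[of "e ` {..<n}" "insert w (e ` {..<n})"]
      unfolding image_upd_lessThan by auto
    then show ?thesis using w by blast
  next
    case False
    then have r: "Re (cinner x x) > 0"
      using cinner_ge_zero[of x] cinner_eq_zero_iff[of x] cinner_self_real[of x]
      by (metis less_eq_real_def of_real_0)
    define s where "s = sqrt (Re (cinner x x))"
    have s: "s > 0" "s * s = Re (cinner x x)" using r unfolding s_def by auto
    define w where "w = complex_of_real (1 / s) *\<^sub>C x"
    have "cinner w w = complex_of_real (1/s) * complex_of_real (1/s) * cinner x x"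
      unfolding w_def by (simp add: cinner_scaleC_left cinner_scaleC_right)
    also have "\<dots> = 1"
      apply (subst cinner_self_real)
      using s r by (simp flip: of_real_mult)
    finally have ww: "cinner w w = 1" .
    have "\<forall>i<n. cinner (e i) w = 0" unfolding w_def by (simp add: cinner_scaleC_right orth)
    then have o: "onb (Suc n) (e(n := w))" using assms(1) ww by (intro onb_extend) auto
    have xw: "x = complex_of_real s *\<^sub>C w"
      unfolding w_def scaleC_scaleC using s by (simp flip: of_real_mult add: scaleC_one)
    have "d = p + x" unfolding x_def by simp
    also have "\<dots> \<in> cspan (insert w (e ` {..<n}))"
    proof -
      have "p \<in> cspan (insert w (e ` {..<n}))"
        using pspan cspan_mono[of "e ` {..<n}" "insert w (e ` {..<n})"] by auto
      moreover have "x \<in> cspan (insert w (e ` {..<n}))"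
        unfolding xw by (intro cspan_scale cspan_base) simp
      ultimately show ?thesis by (rule cspan_add)
    qed
    finally show ?thesis using o unfolding image_upd_lessThan by blast
  qed
qed


definition stinv :: "('a::complex_inner \<Rightarrow> 'a) \<Rightarrow> (nat \<Rightarrow> 'a) \<Rightarrow> nat \<Rightarrow> (nat \<Rightarrow> 'a) \<Rightarrow> (nat \<Rightarrow> 'a) \<Rightarrow> bool" where
  "stinv A dd m u v \<longleftrightarrow> onb (2*m) u \<and> onb (2*m) v \<and>
     (\<forall>k<m. dd k \<in> cspan (u ` {..<2*k+1}) \<and> dd k \<in> cspan (v ` {..<2*k+2})) \<and>
     (\<forall>k<m. (\<forall>j\<le>2*k. cinner (v (2*k)) (A (u j)) = 0) \<and>
            (\<forall>i\<le>2*k+1. cinner (v i) (A (u (2*k+1))) = 0))"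

lemma inv_ext:
  fixes A :: "'a::complex_inner \<Rightarrow> 'a"
  assumes lA: "\<And>x y. A (x + y) = A x + A y" "\<And>c x. A (c *\<^sub>C x) = c *\<^sub>C A x"
    and nf: "\<not> cfinite_dim TYPE('a)"
    and I: "stinv A dd m u v"
  shows "\<exists>u' v'. stinv A dd (Suc m) u' v' \<and> (\<forall>i<2*m. u' i = u i \<and> v' i = v i)"
proof -
  define n where "n = 2*m"
  have ou: "onb n u" and ov: "onb n v" using I unfolding stinv_def n_def by auto
  obtain a where a: "onb (Suc n) (u(n := a))" "dd m \<in> cspan ((u(n := a)) ` {..<Suc n})"
    using complete_step[OF ou nf] by blast
  define u1 where "u1 = u(n := a)"
  let ?F1 = "(\<lambda>j x. cinner (A (u1 j)) x) ` {..n}"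
  obtain c where c: "onb (Suc n) (v(n := c))" "\<forall>f\<in>?F1. f c = 0"
    using free_step[OF ov, of ?F1] nf lin_cinner by auto
  define v1 where "v1 = v(n := c)"
  obtain d where d: "onb (Suc (Suc n)) (v1(Suc n := d))" "dd m \<in> cspan ((v1(Suc n := d)) ` {..<Suc (Suc n)})"
    using complete_step[OF c(1)[folded v1_def] nf] by blast
  define v2 where "v2 = v1(Suc n := d)"
  let ?F2 = "(\<lambda>i x. cinner (v2 i) (A x)) ` {..Suc n}"
  have linF2: "\<forall>f\<in>?F2. lin f"
    using lA unfolding lin_def by (auto simp: cinner_add_right cinner_scaleC_right)
  obtain b where b: "onb (Suc (Suc n)) (u1(Suc n := b))" "\<forall>f\<in>?F2. f b = 0"
    using free_step[OF a(1)[folded u1_def] _ linF2 nf] by auto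
  define u2 where "u2 = u1(Suc n := b)"
  have agu: "u2 i = u i" "v2 i = v i" if "i < n" for i
    using that unfolding u2_def u1_def v2_def v1_def by auto
  have agu1: "u2 i = u1 i" if "i \<le> n" for i
    using that unfolding u2_def by auto
  have "stinv A dd (Suc m) u2 v2"
    unfolding stinv_def
  proof (intro conjI allI impI)
    show "onb (2 * Suc m) u2" using b(1) unfolding u2_def n_def by simp
    show "onb (2 * Suc m) v2" using d(1) unfolding v2_def n_def by simp
  next
    fix k assume k: "k < Suc m"
    show "dd k \<in> cspan (u2 ` {..<2 * k + 1})"
    proof (cases "k < m")
      case True
      then have "u2 ` {..<2 * k + 1} = u ` {..<2 * k + 1}" using agu unfolding n_def by auto
      then show ?thesis using I True unfolding stinv_def by auto
    next
      case False
      then have "k = m" using k by simp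
      moreover have "u2 ` {..<Suc n} = u1 ` {..<Suc n}" using agu1 by auto
      ultimately show ?thesis using a(2) unfolding u1_def n_def by simp
    qed
    show "dd k \<in> cspan (v2 ` {..<2 * k + 2})"
    proof (cases "k < m")
      case True
      then have "v2 ` {..<2 * k + 2} = v ` {..<2 * k + 2}" using agu unfolding n_def by auto
      then show ?thesis using I True unfolding stinv_def by auto
    next
      case False
      then have "k = m" using k by simp
      then show ?thesis using d(2) unfolding v2_def n_def by simp
    qed
  next
    fix k j assume k: "k < Suc m" and j: "j \<le> 2 * k"
    show "cinner (v2 (2 * k)) (A (u2 j)) = 0"
    proof (cases "k < m")
      case True
      then show ?thesis using agu[of "2*k"] agu[of j] j I unfolding stinv_def n_def by auto
    next
      case False
      then have "k = m" using k by simp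
      then have "v2 (2*k) = c" "u2 j = u1 j" using j agu1 unfolding v2_def v1_def n_def by auto
      moreover have "cinner (A (u1 j)) c = 0" using c(2) j \<open>k = m\<close> unfolding n_def by auto
      ultimately show ?thesis by (metis cinner_commute complex_cnj_zero)
    qed
  next
    fix k i assume k: "k < Suc m" and i: "i \<le> 2 * k + 1"
    show "cinner (v2 i) (A (u2 (2 * k + 1))) = 0"
    proof (cases "k < m")
      case True
      then show ?thesis using agu[of "2*k+1"] agu[of i] i I unfolding stinv_def n_def by auto
    next
      case False
      then have "k = m" using k by simp
      then have "u2 (2*k+1) = b" unfolding u2_def n_def by simp
      then show ?thesis using b(2) i \<open>k = m\<close> unfolding n_def by auto
    qed
  qed
  moreover have "\<forall>i<2*m. u2 i = u i \<and> v2 i = v i" using agu unfolding n_def by auto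
  ultimately show ?thesis by blast
qed


theorem lemma2p1:
  fixes A :: "'a::chilbert_space \<Rightarrow> 'a"
  assumes "cseparable TYPE('a)"
    and "\<not> cfinite_dim TYPE('a)"
    and "bounded_cop A"
  shows "\<exists>u v. orthonormal_basis u \<and> orthonormal_basis v \<and>
           (\<forall>N::nat. N \<ge> 1 \<longrightarrow>
              det (mat N N (\<lambda>(i, j). cinner (v i) (A (u j)))) = 0)"
proof -
  obtain D :: "'a set" where D: "countable D" "\<And>x e. e > 0 \<Longrightarrow> \<exists>d\<in>D. cnorm (x - d) < e"
    using assms(1) unfolding cseparable_def by blast
  have "D \<noteq> {}" using D(2)[of 1 0] by auto
  define dd where "dd = from_nat_into D"
  have ddD: "\<exists>k. cnorm (x - dd k) < e" if "e > 0" for x e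
    using D(2)[OF that, of x] range_from_nat_into[OF \<open>D \<noteq> {}\<close> D(1)] unfolding dd_def
    by (metis rangeE)
  have lA: "\<And>x y. A (x + y) = A x + A y" "\<And>c x. A (c *\<^sub>C x) = c *\<^sub>C A x"
    using assms(3) unfolding bounded_cop_def by auto
  have "\<forall>m uv. \<exists>uv'. stinv A dd m (fst uv) (snd uv) \<longrightarrow>
        stinv A dd (Suc m) (fst uv') (snd uv') \<and> (\<forall>i<2*m. fst uv' i = fst uv i \<and> snd uv' i = snd uv i)"
    using inv_ext[OF lA assms(2)] by fastforce
  then obtain g where g: "\<And>m uv. stinv A dd m (fst uv) (snd uv) \<Longrightarrow>
        stinv A dd (Suc m) (fst (g m uv)) (snd (g m uv)) \<and>
        (\<forall>i<2*m. fst (g m uv) i = fst uv i \<and> snd (g m uv) i = snd uv i)"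
    by metis
  define S where "S = rec_nat ((\<lambda>_. 0, \<lambda>_. 0) :: (nat \<Rightarrow> 'a) \<times> (nat \<Rightarrow> 'a)) g"
  have S0: "S 0 = (\<lambda>_. 0, \<lambda>_. 0)" and SS: "S (Suc m) = g m (S m)" for m
    unfolding S_def by simp_all
  have SI: "stinv A dd m (fst (S m)) (snd (S m))" for m
  proof (induction m)
    case 0 then show ?case unfolding S0 stinv_def onb_def by simp
  next
    case (Suc m) then show ?case unfolding SS using g by blast
  qed
  have agree: "m \<le> m' \<Longrightarrow> i < 2*m \<Longrightarrow> fst (S m') i = fst (S m) i \<and> snd (S m') i = snd (S m) i" for m m' i
  proof (induction m' rule: dec_induct)
    case base then show ?case by simp
  next
    case (step q) then show ?case unfolding SS using g[OF SI[of q]] by auto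
  qed
  define u where "u i = fst (S (Suc i)) i" for i
  define v where "v i = snd (S (Suc i)) i" for i
  have uvS: "u i = fst (S M) i \<and> v i = snd (S M) i" if "i < 2*M" for i M
  proof (cases "M \<le> Suc i")
    case True then show ?thesis using agree[OF True that] unfolding u_def v_def by auto
  next
    case False then show ?thesis using agree[of "Suc i" M i] unfolding u_def v_def by auto
  qed
  have onbu: "onb (2*M) u" "onb (2*M) v" for M
    using SI[of M] uvS[of _ M] onb_cong[of "2*M" u "fst (S M)"] onb_cong[of "2*M" v "snd (S M)"]
    unfolding stinv_def by auto
  have ON: "cinner (u i) (u j) = (if i = j then 1 else 0)" "cinner (v i) (v j) = (if i = j then 1 else 0)" for i j
    using onbu[of "Suc (max i j)"] unfolding onb_def by auto
  have spu: "dd k \<in> cspan (range u)" "dd k \<in> cspan (range v)" for k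
  proof -
    have "u ` {..<2*k+1} = fst (S (Suc k)) ` {..<2*k+1}" "v ` {..<2*k+2} = snd (S (Suc k)) ` {..<2*k+2}"
      using uvS[of _ "Suc k"] by auto
    then have "dd k \<in> cspan (u ` {..<2*k+1})" "dd k \<in> cspan (v ` {..<2*k+2})"
      using SI[of "Suc k"] unfolding stinv_def by auto
    then show "dd k \<in> cspan (range u)" "dd k \<in> cspan (range v)"
      using cspan_mono[of "u ` {..<2*k+1}" "range u"] cspan_mono[of "v ` {..<2*k+2}" "range v"] by auto
  qed
  have obu: "orthonormal_basis u" "orthonormal_basis v"
    unfolding orthonormal_basis_def using ON spu ddD by blast+
  have sing: "(\<forall>j\<le>2*k. cinner (v (2*k)) (A (u j)) = 0) \<and>
            (\<forall>i\<le>2*k+1. cinner (v i) (A (u (2*k+1))) = 0)" for k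
  proof -
    have h: "(\<forall>j\<le>2*k. cinner (snd (S (Suc k)) (2*k)) (A (fst (S (Suc k)) j)) = 0) \<and>
            (\<forall>i\<le>2*k+1. cinner (snd (S (Suc k)) i) (A (fst (S (Suc k)) (2*k+1))) = 0)"
      using SI[of "Suc k"] unfolding stinv_def by blast
    have e: "u i = fst (S (Suc k)) i" "v i = snd (S (Suc k)) i" if "i \<le> 2*k+1" for i
      using uvS[of i "Suc k"] that by auto
    show ?thesis using h e by auto
  qed
  have "det (mat N N (\<lambda>(i, j). cinner (v i) (A (u j)))) = 0" if N: "N \<ge> 1" for N
  proof (cases "even (N - 1)")
    case True
    then obtain k where k: "N - 1 = 2*k" by blast
    show ?thesis
      by (rule det_zero_row[of _ N "N - 1"]) (use N k sing[of k] in auto)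
  next
    case False
    then obtain k where k: "N - 1 = 2*k+1" by (metis oddE)
    show ?thesis
      by (rule det_zero_col[of _ N "N - 1"]) (use N k sing[of k] in auto)
  qed
  then show ?thesis using obu by blast
qed

end
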